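(* Let $X$ be a metric space, let $A\subseteq X$ be nonempty and let $Y$ be a hyperconvex metric space. Then the multivalued mapping $\Phi:\mathcal{N}(A,Y)\to\mathcal{P}(\mathcal{N}(X,Y))$, assigning to each $f$ the set of all $f'\in\mathcal{N}(X,Y)$ with $f'|_A=f$, is nonexpansive, i.e. $H(\Phi(f),\Phi(g))\le d_\infty(f,g)$ for all $f,g\in\mathcal{N}(A,Y)$.
   Context: A metric space $Y$ is hyperconvex if $\bigcap_\alpha B(x_\alpha,r_\alpha)\ne\emptyset$ for every family of points $x_\alpha\in Y$ and radii $r_\alpha>0$ with $d(x_\alpha,x_\beta)\le r_\alpha+r_\beta$ for all $\alpha,\beta$ ($B$ denotes closed balls). $\mathcal{N}(A,Y)$ is the set of bounded nonexpansive maps $A\to Y$ with the supremum metric $d_\infty$; $H$ is the Pompeiu–Hausdorff distance in $(\mathcal{N}(X,Y),d_\infty)$: $H(B,C)=\max\{\sup_{b\in B}\mathrm{dist}(b,C),\sup_{c\in C}\mathrm{dist}(c,B)\}$. *)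

theory Defs
  imports "HOL-Analysis.Analysis" "HOL-Library.Extended_Real"
begin

text \<open>Hyperconvexity of a metric space (here: a subset S of a metric type, used with S = UNIV).
  A family of closed balls is represented by the set of its (centre, radius) pairs.\<close>
definition hyperconvex :: "'b::metric_space set \<Rightarrow> bool" where
  "hyperconvex S \<longleftrightarrow>
     (\<forall>F. F \<subseteq> S \<times> {0<..} \<longrightarrow>
        (\<forall>(x,r)\<in>F. \<forall>(y,s)\<in>F. dist x y \<le> r + s) \<longrightarrow>
        S \<inter> (\<Inter>(x,r)\<in>F. cball x r) \<noteq> {})"

definition NE :: "'a::metric_space set \<Rightarrow> ('a \<Rightarrow> 'b::metric_space) set" where
  "NE A = {f. (\<forall>x\<in>A. \<forall>y\<in>A. dist (f x) (f y) \<le> dist x y) \<and> bounded (f ` A)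
              \<and> (\<forall>x. x \<notin> A \<longrightarrow> f x = undefined)}"

definition dsup :: "'a set \<Rightarrow> ('a \<Rightarrow> 'b::metric_space) \<Rightarrow> ('a \<Rightarrow> 'b) \<Rightarrow> real" where
  "dsup A f g = (SUP x\<in>A. dist (f x) (g x))"

text \<open>Pompeiu--Hausdorff distance of sets of maps X \<rightarrow> Y w.r.t. the supremum metric
  on X (extended-real valued, so it is meaningful for arbitrary sets).\<close>
definition setdist_pt :: "'a set \<Rightarrow> ('a \<Rightarrow> 'b::metric_space) \<Rightarrow> ('a \<Rightarrow> 'b) set \<Rightarrow> ereal" where
  "setdist_pt X b C = (INF c\<in>C. ereal (dsup X b c))"

definition hausdorff_sup :: "'a set \<Rightarrow> ('a \<Rightarrow> 'b::metric_space) set \<Rightarrow> ('a \<Rightarrow> 'b) set \<Rightarrow> ereal" where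
  "hausdorff_sup X B C = max (SUP b\<in>B. setdist_pt X b C) (SUP c\<in>C. setdist_pt X c B)"

definition Phi :: "'a::metric_space set \<Rightarrow> ('a \<Rightarrow> 'b::metric_space) \<Rightarrow> ('a \<Rightarrow> 'b) set" where
  "Phi A f = {f' \<in> NE (UNIV::'a set). restrict f' A = f}"

end

theory Submission
  imports Defs
begin

lemma ext_exists:
  fixes f' :: "'a::metric_space \<Rightarrow> 'b::metric_space" and g :: "'a \<Rightarrow> 'b"
  assumes hc: "hyperconvex (UNIV :: 'b set)"
    and gne: "\<forall>x\<in>A. \<forall>y\<in>A. dist (g x) (g y) \<le> dist x y"
    and fne: "\<forall>x y. dist (f' x) (f' y) \<le> dist x y"
    and dpos: "d > 0"
    and gd: "\<forall>a\<in>A. dist (g a) (f' a) \<le> d"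
  shows "\<exists>g'. (\<forall>x y. dist (g' x) (g' y) \<le> dist x y) \<and> (\<forall>a\<in>A. g' a = g a) \<and> (\<forall>x. dist (g' x) (f' x) \<le> d)"
proof -
  define S where "S = {G :: ('a \<times> 'b) set. (\<forall>(a,y)\<in>G. \<forall>(b,z)\<in>G. dist y z \<le> dist a b)
      \<and> (\<forall>(a,y)\<in>G. dist y (f' a) \<le> d) \<and> (\<forall>a\<in>A. (a, g a) \<in> G)}"
  define G0 where "G0 = (\<lambda>a. (a, g a)) ` A"
  have G0S: "G0 \<in> S" unfolding S_def G0_def using gne gd by auto
  have "\<forall>C\<in>chains S. \<exists>U\<in>S. \<forall>X\<in>C. X \<subseteq> U"
  proof
    fix C assume C: "C \<in> chains S"
    show "\<exists>U\<in>S. \<forall>X\<in>C. X \<subseteq> U"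
    proof (cases "C = {}")
      case True then show ?thesis using G0S by auto
    next
      case False
      have CS: "C \<subseteq> S" and ch: "\<forall>X\<in>C. \<forall>Y\<in>C. X \<subseteq> Y \<or> Y \<subseteq> X"
        using C unfolding chains_def chain_subset_def by auto
      have "\<Union>C \<in> S"
        unfolding S_def
      proof (intro CollectI conjI)
        show "\<forall>(a,y)\<in>\<Union>C. \<forall>(b,z)\<in>\<Union>C. dist y z \<le> dist a b"
        proof (clarify)
          fix a y b z X Y assume "(a,y) \<in> X" "X \<in> C" "(b,z) \<in> Y" "Y \<in> C"
          then obtain W where "W \<in> C" "(a,y) \<in> W" "(b,z) \<in> W" using ch by blast
          then show "dist y z \<le> dist a b" using CS unfolding S_def by blast
        qed
        show "\<forall>(a,y)\<in>\<Union>C. dist y (f' a) \<le> d" using CS unfolding S_def by blast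
        obtain X where "X \<in> C" using False by auto
        then show "\<forall>a\<in>A. (a, g a) \<in> \<Union>C" using CS unfolding S_def by blast
      qed
      then show ?thesis by blast
    qed
  qed
  from Zorn_Lemma2[OF this] obtain M where MS: "M \<in> S" and Mmax: "\<forall>X\<in>S. M \<subseteq> X \<longrightarrow> X = M"
    by blast
  have Mne: "\<And>a y b z. (a,y)\<in>M \<Longrightarrow> (b,z)\<in>M \<Longrightarrow> dist y z \<le> dist a b"
    and Md: "\<And>a y. (a,y)\<in>M \<Longrightarrow> dist y (f' a) \<le> d"
    and MA: "\<And>a. a\<in>A \<Longrightarrow> (a, g a) \<in> M"
    using MS unfolding S_def by auto
  have dom: "\<exists>y. (x,y) \<in> M" for x
  proof (rule ccontr)
    assume nx: "\<not> (\<exists>y. (x,y) \<in> M)"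
    define F where "F = (\<lambda>(a,y). (y, dist a x)) ` M \<union> {(f' x, d)}"
    have Fpos: "F \<subseteq> UNIV \<times> {0<..}"
    proof -
      have "0 < dist a x" if "(a,y) \<in> M" for a y
      proof -
        have "a \<noteq> x" using nx that by auto
        then show ?thesis by simp
      qed
      then show ?thesis unfolding F_def using dpos by auto
    qed
    have aux: "dist y (f' x) \<le> dist a x + d" if "(a,y) \<in> M" for a y
    proof -
      have "dist y (f' x) \<le> dist y (f' a) + dist (f' a) (f' x)" by (rule dist_triangle)
      moreover have "dist (f' a) (f' x) \<le> dist a x" using fne by blast
      ultimately show ?thesis using Md[OF that] by linarith
    qed
    have Fpair: "\<forall>(y,r)\<in>F. \<forall>(z,s)\<in>F. dist y z \<le> r + s"
    proof (clarify)
      fix y r z s assume yr: "(y,r) \<in> F" and zs: "(z,s) \<in> F"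
      show "dist y z \<le> r + s"
      proof (cases "(y,r) = (f' x, d)")
        case True
        then show ?thesis
        proof (cases "(z,s) = (f' x, d)")
          case False
          then obtain b where "(b,z) \<in> M" "s = dist b x" using zs unfolding F_def by auto
          then show ?thesis using aux[of b z] True by (simp add: dist_commute)
        qed (use dpos in auto)
      next
        case False
        then obtain a where a: "(a,y) \<in> M" "r = dist a x" using yr unfolding F_def by auto
        show ?thesis
        proof (cases "(z,s) = (f' x, d)")
          case True
          then show ?thesis using aux[OF a(1)] a(2) by simp
        next
          case False
          then obtain b where b: "(b,z) \<in> M" "s = dist b x" using zs unfolding F_def by auto
          have "dist y z \<le> dist a b" using Mne[OF a(1) b(1)] .
          also have "\<dots> \<le> dist a x + dist b x" by (rule dist_triangle2)
          finally show ?thesis using a b by simp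
        qed
      qed
    qed
    obtain p where p: "p \<in> (\<Inter>(x,r)\<in>F. cball x r)"
    proof -
      have "UNIV \<inter> (\<Inter>(x,r)\<in>F. cball x r) \<noteq> {}"
        using hc Fpos Fpair unfolding hyperconvex_def by blast
      then show ?thesis using that by blast
    qed
    have p1: "dist y p \<le> dist a x" if "(a,y) \<in> M" for a y
    proof -
      have "(y, dist a x) \<in> F" unfolding F_def using that by force
      then show ?thesis using p by fastforce
    qed
    have p2: "dist (f' x) p \<le> d" using p unfolding F_def by auto
    have "insert (x,p) M \<in> S"
      unfolding S_def
    proof (intro CollectI conjI)
      show "\<forall>(a,y)\<in>insert (x,p) M. \<forall>(b,z)\<in>insert (x,p) M. dist y z \<le> dist a b"
        using Mne p1 by (fastforce simp: dist_commute)
      show "\<forall>(a,y)\<in>insert (x,p) M. dist y (f' a) \<le> d" using Md p2 by (auto simp: dist_commute)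
      show "\<forall>a\<in>A. (a, g a) \<in> insert (x,p) M" using MA by auto
    qed
    moreover have "insert (x,p) M \<noteq> M" using nx by auto
    ultimately show False using Mmax by blast
  qed
  define g' where "g' x = (THE y. (x,y) \<in> M)" for x
  have g'M: "(x, g' x) \<in> M" for x
  proof -
    obtain y where y: "(x,y) \<in> M" using dom by blast
    have "z = y" if "(x,z) \<in> M" for z using Mne[OF that y] by simp
    then have "g' x = y" unfolding g'_def using y by blast
    then show ?thesis using y by simp
  qed
  show ?thesis
  proof (intro exI conjI allI ballI)
    show "dist (g' x) (g' y) \<le> dist x y" for x y using Mne[OF g'M g'M] .
    show "dist (g' x) (f' x) \<le> d" for x using Md[OF g'M] .
    fix a assume "a \<in> A"
    have "z = g a" if "(a,z) \<in> M" for z using Mne[OF that MA[OF \<open>a\<in>A\<close>]] by simp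
    then show "g' a = g a" using g'M by blast
  qed
qed


lemma bdd_dist:
  assumes "f \<in> NE A" "g \<in> NE A"
  shows "bdd_above ((\<lambda>x. dist (f x) (g x)) ` A)"
proof -
  obtain c1 e1 where 1: "\<forall>y\<in>f ` A. dist c1 y \<le> e1" using assms(1) unfolding NE_def bounded_def by auto
  obtain c2 e2 where 2: "\<forall>y\<in>g ` A. dist c2 y \<le> e2" using assms(2) unfolding NE_def bounded_def by auto
  have "dist (f x) (g x) \<le> e1 + dist c1 c2 + e2" if "x \<in> A" for x
  proof -
    have "dist (f x) (g x) \<le> dist (f x) c1 + dist c1 (g x)" by (rule dist_triangle)
    moreover have "dist c1 (g x) \<le> dist c1 c2 + dist c2 (g x)" by (rule dist_triangle)
    moreover have "dist c1 (f x) \<le> e1" "dist c2 (g x) \<le> e2" using 1 2 that by auto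
    ultimately show ?thesis by (simp add: dist_commute)
  qed
  then show ?thesis by (intro bdd_aboveI2) auto
qed

lemma one_side:
  fixes A :: "'a::metric_space set"
  assumes ne: "A \<noteq> {}"
    and hc: "hyperconvex (UNIV :: 'b::metric_space set)"
    and f: "f \<in> (NE A :: ('a \<Rightarrow> 'b) set)" and g: "g \<in> NE A"
    and f': "f' \<in> Phi A f"
  shows "setdist_pt UNIV f' (Phi A g) \<le> ereal (dsup A f g)"
proof -
  define d where "d = dsup A f g"
  have bdd: "bdd_above ((\<lambda>x. dist (f x) (g x)) ` A)" using bdd_dist[OF f g] .
  have le: "dist (f a) (g a) \<le> d" if "a \<in> A" for a
    unfolding d_def dsup_def using bdd that by (rule cSUP_upper2) simp
  have f'NE: "f' \<in> NE UNIV" and rf: "restrict f' A = f" using f' unfolding Phi_def by auto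
  have f'a: "f' a = f a" if "a \<in> A" for a using rf that by (metis restrict_apply')
  have fout: "f x = undefined" "g x = undefined" if "x \<notin> A" for x
    using f g that unfolding NE_def by auto
  obtain a0 where "a0 \<in> A" using ne by auto
  then have "d \<ge> 0" using le[of a0] by (meson dual_order.trans zero_le_dist)
  show ?thesis
  proof (cases "d = 0")
    case True
    have "f = g"
    proof
      fix x show "f x = g x" using le[of x] True fout[of x] by (cases "x \<in> A") auto
    qed
    then have "f' \<in> Phi A g" using f' by simp
    moreover have "dsup UNIV f' f' = 0" unfolding dsup_def by simp
    ultimately show ?thesis unfolding setdist_pt_def d_def[symmetric] using True
      by (metis INF_lower ereal_eq_0(1))
  next
    case False
    then have dpos: "d > 0" using \<open>d \<ge> 0\<close> by simp
    have fne: "\<forall>x y. dist (f' x) (f' y) \<le> dist x y" using f'NE unfolding NE_def by auto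
    have gne: "\<forall>x\<in>A. \<forall>y\<in>A. dist (g x) (g y) \<le> dist x y" using g unfolding NE_def by auto
    have gd: "\<forall>a\<in>A. dist (g a) (f' a) \<le> d" using le f'a by (simp add: dist_commute)
    obtain g' where g'1: "\<forall>x y. dist (g' x) (g' y) \<le> dist x y" and g'2: "\<forall>a\<in>A. g' a = g a"
      and g'3: "\<forall>x. dist (g' x) (f' x) \<le> d"
      using ext_exists[OF hc gne fne dpos gd] by blast
    obtain c e where ce: "\<forall>y\<in>range f'. dist c y \<le> e" using f'NE unfolding NE_def bounded_def by auto
    have "bounded (range g')" unfolding bounded_def
    proof (intro exI ballI)
      fix y assume "y \<in> range g'"
      then obtain x where y: "y = g' x" by auto
      have "dist c (g' x) \<le> dist c (f' x) + dist (f' x) (g' x)" by (rule dist_triangle)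
      moreover have "dist c (f' x) \<le> e" using ce by auto
      moreover have "dist (f' x) (g' x) \<le> d" using g'3 by (simp add: dist_commute)
      ultimately show "dist c y \<le> e + d" unfolding y by linarith
    qed
    then have "g' \<in> NE UNIV" using g'1 unfolding NE_def by auto
    moreover have "restrict g' A = g"
    proof
      fix x show "restrict g' A x = g x" using g'2 fout[of x] by (cases "x \<in> A") auto
    qed
    ultimately have "g' \<in> Phi A g" unfolding Phi_def by auto
    moreover have "dsup UNIV f' g' \<le> d" unfolding dsup_def
      by (rule cSUP_least) (use g'3 in \<open>auto simp: dist_commute\<close>)
    ultimately show ?thesis unfolding setdist_pt_def d_def[symmetric]
      by (meson INF_lower2 ereal_less_eq(3))
  qed
qed

theorem lemma5p3:
  fixes A :: "'a::metric_space set"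
  assumes "A \<noteq> {}"
    and "hyperconvex (UNIV :: 'b::metric_space set)"
    and "f \<in> (NE A :: ('a \<Rightarrow> 'b) set)" and "g \<in> NE A"
  shows "hausdorff_sup (UNIV::'a set) (Phi A f) (Phi A g) \<le> ereal (dsup A f g)"
proof -
  have sym: "dsup A g f = dsup A f g" unfolding dsup_def by (simp add: dist_commute)
  have 1: "(SUP b\<in>Phi A f. setdist_pt UNIV b (Phi A g)) \<le> ereal (dsup A f g)"
    by (rule SUP_least) (rule one_side[OF assms])
  have 2: "(SUP b\<in>Phi A g. setdist_pt UNIV b (Phi A f)) \<le> ereal (dsup A f g)"
    by (rule SUP_least) (use one_side[OF assms(1,2,4,3)] sym in auto)
  show ?thesis unfolding hausdorff_sup_def using 1 2 by simp
qed

end
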